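(* Let $G=(\{f_i\},\{c_i\},\{X_i\},W)$ be a networked public goods game (as in the context). Suppose there exist a symmetric matrix $W^0=(w^0_{ij})$ and constants $L_i\ge 0$, $C_i>0$ such that (1) $W^0$ is positive definite with minimal eigenvalue $\sigma_0>0$, and $w^0_{ii}=1$ for all $i$; (2) $c_i'$ is $L_i$-Lipschitz for every $i$; (3) $f_i$ is $C_i$-concave for every $i$; (4) $\sigma_0>\sigma_{\max}(\Sigma)$, where $\Sigma=(\sigma_{ij})$ with $\sigma_{ii}=0$ and, for $i\ne j$, $\sigma_{ij}=\frac{2L_i|w_{ij}|}{C_i}+|w^0_{ij}-w_{ij}|$, and $\sigma_{\max}$ denotes the maximum singular value. Then $G$ has a unique (pure) Nash equilibrium.
   Context: There are $n$ players; player $i$ chooses effort $x_i\in X_i=[\underline{x}_i,\bar{x}_i]$, $X=\prod_iX_i$. $W=(w_{ij})$ is a real $n\times n$ matrix with $w_{ii}=1$. The gain of $i$ is $k_i=\sum_jw_{ij}x_j\in K_i=[\underline{k}_i,\bar{k}_i]$ (min and max over $X$). $f_i:K_i\to\mathbb{R}$ is twice differentiable, concave and strictly increasing; $c_i:X_i\to\mathbb{R}$ is twice differentiable, convex and strictly increasing; utility $u_i(\mathbf{x})=f_i(k_i)-c_i(x_i)$. A Nash equilibrium is $\mathbf{x}\in X$ with $u_i(x_i',\mathbf{x}_{-i})\le u_i(\mathbf{x})$ for all $i$, $x_i'\in X_i$. A differentiable $g$ on an interval is $C$-concave if $g(y)\le g(x)+g'(x)(y-x)-\frac C2(y-x)^2$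 for all $x,y$. *)

theory Defs
  imports "HOL-Analysis.Analysis"
begin

definition strat_set :: "('n::finite \<Rightarrow> real) \<Rightarrow> ('n \<Rightarrow> real) \<Rightarrow> 'n \<Rightarrow> real set" where
  "strat_set lo hi i = {lo i .. hi i}"

definition profile_set :: "('n::finite \<Rightarrow> real) \<Rightarrow> ('n \<Rightarrow> real) \<Rightarrow> (real^'n) set" where
  "profile_set lo hi = {x. \<forall>i. x $ i \<in> strat_set lo hi i}"

definition gain :: "real^'n^'n \<Rightarrow> real^'n \<Rightarrow> 'n::finite \<Rightarrow> real" where
  "gain W x i = (\<Sum>j\<in>UNIV. W $ i $ j * x $ j)"

definition gain_set :: "real^'n^'n \<Rightarrow> ('n::finite \<Rightarrow> real) \<Rightarrow> ('n \<Rightarrow> real) \<Rightarrow> 'n \<Rightarrow> real set" where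
  "gain_set W lo hi i =
     {Inf ((\<lambda>x. gain W x i) ` profile_set lo hi) .. Sup ((\<lambda>x. gain W x i) ` profile_set lo hi)}"

definition utility :: "('n \<Rightarrow> real \<Rightarrow> real) \<Rightarrow> ('n \<Rightarrow> real \<Rightarrow> real) \<Rightarrow> real^'n^'n
    \<Rightarrow> 'n::finite \<Rightarrow> real^'n \<Rightarrow> real" where
  "utility f c W i x = f i (gain W x i) - c i (x $ i)"

definition upd :: "real^'n \<Rightarrow> 'n::finite \<Rightarrow> real \<Rightarrow> real^'n" where
  "upd x i y = (\<chi> j. if j = i then y else x $ j)"

definition nash_equilibrium ::
  "('n \<Rightarrow> real \<Rightarrow> real) \<Rightarrow> ('n \<Rightarrow> real \<Rightarrow> real) \<Rightarrow> real^'n^'n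
    \<Rightarrow> ('n::finite \<Rightarrow> real) \<Rightarrow> ('n \<Rightarrow> real) \<Rightarrow> real^'n \<Rightarrow> bool" where
  "nash_equilibrium f c W lo hi x \<longleftrightarrow>
     x \<in> profile_set lo hi \<and>
     (\<forall>i. \<forall>y \<in> strat_set lo hi i. utility f c W i (upd x i y) \<le> utility f c W i x)"

definition C_concave_on :: "real \<Rightarrow> real set \<Rightarrow> (real \<Rightarrow> real) \<Rightarrow> (real \<Rightarrow> real) \<Rightarrow> bool" where
  "C_concave_on C S g g' \<longleftrightarrow>
     (\<forall>x\<in>S. \<forall>y\<in>S. g y \<le> g x + g' x * (y - x) - C / 2 * (y - x)^2)"

definition is_eigenvalue :: "real^'n^'n \<Rightarrow> real \<Rightarrow> bool" where
  "is_eigenvalue A \<mu> \<longleftrightarrow> (\<exists>v. v \<noteq> 0 \<and> A *v v = \<mu> *\<^sub>R v)"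

definition is_min_eigenvalue :: "real^'n^'n \<Rightarrow> real \<Rightarrow> bool" where
  "is_min_eigenvalue A \<mu> \<longleftrightarrow> is_eigenvalue A \<mu> \<and> (\<forall>\<nu>. is_eigenvalue A \<nu> \<longrightarrow> \<mu> \<le> \<nu>)"

definition pos_def :: "real^'n^'n \<Rightarrow> bool" where
  "pos_def A \<longleftrightarrow> (\<forall>v. v \<noteq> 0 \<longrightarrow> v \<bullet> (A *v v) > 0)"

text \<open>Maximum singular value = operator 2-norm.\<close>
definition sigma_max :: "real^'n^'m \<Rightarrow> real" where
  "sigma_max A = onorm (\<lambda>v. A *v v)"

end

theory Submission
  imports Defs
begin


lemma deriv_le_right:
  fixes g :: "real \<Rightarrow> real"
  assumes d: "(g has_real_derivative D) (at c within S)" and cy: "c < y" and sub: "{c..y} \<subseteq> S"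
    and q: "\<And>z. c < z \<Longrightarrow> z \<le> y \<Longrightarrow> (g z - g c) / (z - c) \<le> M"
  shows "D \<le> M"
proof -
  have "(g has_real_derivative D) (at c within {c..y})" using DERIV_subset[OF d sub] .
  hence lim: "((\<lambda>z. (g z - g c) / (z - c)) \<longlongrightarrow> D) (at_right c)"
    using has_field_derivative_iff at_within_Icc_at_right[OF cy] by metis
  have ev: "eventually (\<lambda>z. M \<ge> (g z - g c) / (z - c)) (at_right c)"
    unfolding eventually_at_right_field using cy q by (intro exI[of _ y]) auto
  show ?thesis using tendsto_upperbound[OF lim ev] by simp
qed

lemma deriv_ge_left:
  fixes g :: "real \<Rightarrow> real"
  assumes d: "(g has_real_derivative D) (at c within S)" and cy: "y < c" and sub: "{y..c} \<subseteq> S"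
    and q: "\<And>z. y \<le> z \<Longrightarrow> z < c \<Longrightarrow> (g z - g c) / (z - c) \<ge> M"
  shows "D \<ge> M"
proof -
  have "(g has_real_derivative D) (at c within {y..c})" using DERIV_subset[OF d sub] .
  hence lim: "((\<lambda>z. (g z - g c) / (z - c)) \<longlongrightarrow> D) (at_left c)"
    using has_field_derivative_iff at_within_Icc_at_left[OF cy] by metis
  have ev: "eventually (\<lambda>z. M \<le> (g z - g c) / (z - c)) (at_left c)"
    unfolding eventually_at_left_field using cy q by (intro exI[of _ y]) auto
  show ?thesis using tendsto_lowerbound[OF lim ev] by simp
qed

lemma foc_max:
  fixes g :: "real \<Rightarrow> real"
  assumes d: "(g has_real_derivative D) (at c within {a..b})" and c: "c \<in> {a..b}"
    and mx: "\<And>z. z \<in> {a..b} \<Longrightarrow> g z \<le> g c" and y: "y \<in> {a..b}"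
  shows "D * (y - c) \<le> 0"
proof (cases y c rule: linorder_cases)
  case less
  have "D \<ge> 0"
    apply (rule deriv_ge_left[OF d less])
    using c y apply auto[1]
    using mx c y by (auto intro!: divide_nonpos_neg)
  then show ?thesis using less by (simp add: mult_nonneg_nonpos)
next
  case greater
  have "D \<le> 0"
    apply (rule deriv_le_right[OF d greater])
    using c y apply auto[1]
    using mx c y by (auto intro!: divide_nonpos_pos)
  then show ?thesis using greater by (simp add: mult_nonpos_nonneg)
qed simp

lemma convex_tangent:
  fixes g :: "real \<Rightarrow> real"
  assumes cv: "convex_on {a..b} g" and d: "(g has_real_derivative D) (at c within {a..b})"
    and c: "c \<in> {a..b}" and y: "y \<in> {a..b}"
  shows "g c + D * (y - c) \<le> g y"
proof (cases y c rule: linorder_cases)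
  case less
  have "D \<ge> (g y - g c) / (y - c)"
  proof (rule deriv_ge_left[OF d less])
    show "{y..c} \<subseteq> {a..b}" using c y by auto
    fix z assume z: "y \<le> z" "z < c"
    define t where "t = (c - z) / (c - y)"
    have t01: "0 \<le> t" "t \<le> 1" using z less by (auto simp: t_def field_simps)
    have "t * (c - y) = c - z" using less by (simp add: t_def)
    hence zeq: "z = (1 - t) * c + t * y" by (simp add: algebra_simps)
    have "g z \<le> (1 - t) * g c + t * g y"
      using convex_onD[OF cv t01 c y] zeq by simp
    hence h: "g z - g c \<le> t * (g y - g c)" by (simp add: algebra_simps)
    have zc: "z - c = t * (y - c)" using zeq by (simp add: algebra_simps)
    have tpos: "t > 0" using z less by (simp add: t_def)
    have "(g z - g c) / (z - c) \<ge> t * (g y - g c) / (t * (y - c))"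
    proof -
      have "t * (y - c) < 0" using tpos less by (simp add: mult_pos_neg)
      then show ?thesis unfolding zc using h by (intro divide_right_mono_neg) auto
    qed
    thus "(g z - g c) / (z - c) \<ge> (g y - g c) / (y - c)" using tpos by simp
  qed
  hence "D * (y - c) \<le> g y - g c" using less by (simp add: divide_le_eq mult.commute)
  then show ?thesis by simp
next
  case greater
  have "D \<le> (g y - g c) / (y - c)"
  proof (rule deriv_le_right[OF d greater])
    show "{c..y} \<subseteq> {a..b}" using c y by auto
    fix z assume z: "c < z" "z \<le> y"
    define t where "t = (z - c) / (y - c)"
    have t01: "0 \<le> t" "t \<le> 1" using z greater by (auto simp: t_def field_simps)
    have "t * (y - c) = z - c" using greater by (simp add: t_def)
    hence zeq: "z = (1 - t) * c + t * y" by (simp add: algebra_simps)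
    have "g z \<le> (1 - t) * g c + t * g y"
      using convex_onD[OF cv t01 c y] zeq by simp
    hence h: "g z - g c \<le> t * (g y - g c)" by (simp add: algebra_simps)
    have zc: "z - c = t * (y - c)" using zeq by (simp add: algebra_simps)
    have tpos: "t > 0" using z greater by (simp add: t_def)
    have "(g z - g c) / (z - c) \<le> t * (g y - g c) / (t * (y - c))"
      unfolding zc using h greater tpos
      by (intro divide_right_mono) auto
    thus "(g z - g c) / (z - c) \<le> (g y - g c) / (y - c)" using tpos by simp
  qed
  hence "D * (y - c) \<le> g y - g c" using greater by (simp add: le_divide_eq mult.commute)
  then show ?thesis by simp
qed simp



lemma quad_zero:
  fixes b c :: real
  assumes h: "\<And>t. 0 \<le> 2 * t * b + t^2 * c"
  shows "b = 0"
proof (rule ccontr)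
  assume bn: "b \<noteq> 0"
  define s where "s = \<bar>c\<bar> + 1"
  have sp: "s > 0" by (simp add: s_def add_nonneg_pos)
  have h1: "0 \<le> 2 * (-b/s) * b + (-b/s)^2 * c" by (rule h)
  have "s^2 * (2 * (-b/s) * b + (-b/s)^2 * c) = b^2 * (c - 2 * s)"
    using sp by (simp add: field_simps power2_eq_square)
  moreover have "b^2 * (c - 2 * s) < 0"
    using bn by (intro mult_pos_neg) (auto simp: s_def)
  moreover have "0 \<le> s^2 * (2 * (-b/s) * b + (-b/s)^2 * c)" using h1 by simp
  ultimately show False by linarith
qed

lemma sym_inner:
  fixes A :: "real^'n^'n"
  assumes sym: "transpose A = A"
  shows "a \<bullet> (A *v b) = b \<bullet> (A *v a)"
proof -
  have "a \<bullet> (A *v b) = (a v* A) \<bullet> b" by (simp add: dot_lmul_matrix)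
  also have "a v* A = A *v a" using vector_transpose_matrix[of a A] sym by simp
  finally show ?thesis by (simp add: inner_commute)
qed

lemma min_eig_quad:
  fixes A :: "real^'n^'n"
  assumes sym: "transpose A = A" and me: "is_min_eigenvalue A \<sigma>"
  shows "\<sigma> * (v \<bullet> v) \<le> v \<bullet> (A *v v)"
proof -
  have cont: "continuous_on (sphere 0 1) (\<lambda>w::real^'n. w \<bullet> (A *v w))"
    by (intro continuous_intros)
  obtain u where u: "u \<in> sphere (0::real^'n) 1" and umin: "\<And>w. w \<in> sphere 0 1 \<Longrightarrow> u \<bullet> (A *v u) \<le> w \<bullet> (A *v w)"
    using continuous_attains_inf[OF compact_sphere _ cont] by fastforce
  define m where "m = u \<bullet> (A *v u)"
  have uu: "u \<bullet> u = 1" using u by (simp add: dot_square_norm)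
  have quad: "m * (v \<bullet> v) \<le> v \<bullet> (A *v v)" for v
  proof (cases "v = 0")
    case True then show ?thesis by simp
  next
    case False
    define w where "w = (1 / norm v) *\<^sub>R v"
    have nv: "norm v > 0" using False by simp
    have "w \<in> sphere 0 1" using nv by (simp add: w_def)
    hence "m \<le> w \<bullet> (A *v w)" using umin m_def by simp
    also have "w \<bullet> (A *v w) = (v \<bullet> (A *v v)) / (norm v)^2"
      by (simp add: w_def matrix_vector_mult_scaleR power2_eq_square)
    finally have "m * (norm v)^2 \<le> v \<bullet> (A *v v)" using nv by (simp add: le_divide_eq)
    then show ?thesis by (simp add: power2_norm_eq_inner)
  qed
  define w where "w = A *v u - m *\<^sub>R u"
  have "\<And>t. 0 \<le> 2 * t * (w \<bullet> w) + t^2 * (w \<bullet> (A *v w) - m * (w \<bullet> w))"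
  proof -
    fix t :: real
    have q: "m * ((u + t *\<^sub>R w) \<bullet> (u + t *\<^sub>R w)) \<le> (u + t *\<^sub>R w) \<bullet> (A *v (u + t *\<^sub>R w))"
      by (rule quad)
    have s1: "w \<bullet> (A *v u) = u \<bullet> (A *v w)" by (rule sym_inner[OF sym])
    have ww: "w \<bullet> w = w \<bullet> (A *v u) - m * (w \<bullet> u)" by (simp add: w_def inner_diff_right inner_commute algebra_simps)
    have e1: "(u + t *\<^sub>R w) \<bullet> (u + t *\<^sub>R w) = 1 + 2 * t * (u \<bullet> w) + t^2 * (w \<bullet> w)"
      using uu by (simp add: inner_add_left inner_add_right inner_commute power2_eq_square algebra_simps)
    have e2: "(u + t *\<^sub>R w) \<bullet> (A *v (u + t *\<^sub>R w)) = m + 2 * t * (w \<bullet> (A *v u)) + t^2 * (w \<bullet> (A *v w))"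
      using s1 by (simp add: m_def matrix_vector_right_distrib matrix_vector_mult_scaleR inner_add_left inner_add_right power2_eq_square algebra_simps)
    show "0 \<le> 2 * t * (w \<bullet> w) + t^2 * (w \<bullet> (A *v w) - m * (w \<bullet> w))"
      using q unfolding e1 e2 ww by (simp add: inner_commute algebra_simps)
  qed
  hence "w \<bullet> w = 0" by (rule quad_zero)
  hence "A *v u = m *\<^sub>R u" by (simp add: w_def)
  moreover have "u \<noteq> 0" using u by auto
  ultimately have "is_eigenvalue A m" unfolding is_eigenvalue_def by blast
  hence "\<sigma> \<le> m" using me unfolding is_min_eigenvalue_def by blast
  hence "\<sigma> * (v \<bullet> v) \<le> m * (v \<bullet> v)" by (simp add: mult_right_mono)
  also have "\<dots> \<le> v \<bullet> (A *v v)" by (rule quad)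
  finally show ?thesis .
qed


theorem theorem3p8:
  fixes lo hi :: "'n::finite \<Rightarrow> real"
    and W W0 :: "real^'n^'n"
    and f f' f'' c c' c'' :: "'n \<Rightarrow> real \<Rightarrow> real"
    and L C :: "'n \<Rightarrow> real"
    and \<sigma>0 :: real
  assumes interval: "\<And>i. lo i \<le> hi i"
    and W_diag: "\<And>i. W $ i $ i = 1"
    and f_d1: "\<And>i k. k \<in> gain_set W lo hi i \<Longrightarrow>
                 (f i has_real_derivative f' i k) (at k within gain_set W lo hi i)"
    and f_d2: "\<And>i k. k \<in> gain_set W lo hi i \<Longrightarrow>
                 (f' i has_real_derivative f'' i k) (at k within gain_set W lo hi i)"
    and f_concave: "\<And>i. concave_on (gain_set W lo hi i) (f i)"
    and f_incr: "\<And>i. strict_mono_on (gain_set W lo hi i) (f i)"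
    and c_d1: "\<And>i t. t \<in> strat_set lo hi i \<Longrightarrow>
                 (c i has_real_derivative c' i t) (at t within strat_set lo hi i)"
    and c_d2: "\<And>i t. t \<in> strat_set lo hi i \<Longrightarrow>
                 (c' i has_real_derivative c'' i t) (at t within strat_set lo hi i)"
    and c_convex: "\<And>i. convex_on (strat_set lo hi i) (c i)"
    and c_incr: "\<And>i. strict_mono_on (strat_set lo hi i) (c i)"
    and L_nonneg: "\<And>i. L i \<ge> 0"
    and C_pos: "\<And>i. C i > 0"
    and W0_sym: "transpose W0 = W0"
    and W0_pd: "pos_def W0"
    and W0_min_eig: "is_min_eigenvalue W0 \<sigma>0"
    and \<sigma>0_pos: "\<sigma>0 > 0"
    and W0_diag: "\<And>i. W0 $ i $ i = 1"
    and c'_lip: "\<And>i. lipschitz_on (L i) (strat_set lo hi i) (c' i)"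
    and f_Cconc: "\<And>i. C_concave_on (C i) (gain_set W lo hi i) (f i) (f' i)"
    and spectral: "\<sigma>0 > sigma_max (\<chi> i j. if i = j then 0
                      else 2 * L i * \<bar>W $ i $ j\<bar> / C i + \<bar>W0 $ i $ j - W $ i $ j\<bar>)"
  shows "\<exists>!x. nash_equilibrium f c W lo hi x"
proof -
  let ?P = "profile_set lo hi"
  let ?S = "\<lambda>i. strat_set lo hi i"
  let ?K = "\<lambda>i. gain_set W lo hi i"
  define F where "F = (\<lambda>i x. f' i (gain W x i) - c' i (x $ i))"
  have Sdef: "\<And>i. strat_set lo hi i = {lo i..hi i}" by (simp add: strat_set_def)
  have Pbox: "?P = cbox (\<chi> i. lo i) (\<chi> i. hi i)"
    by (auto simp: profile_set_def strat_set_def mem_box_cart)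
  have gcont: "continuous_on A (\<lambda>x. gain W x i)" for A i
    unfolding gain_def by (intro continuous_intros)
  have bdd: "bounded ((\<lambda>x. gain W x i) ` ?P)" for i
    unfolding Pbox by (intro compact_imp_bounded compact_continuous_image gcont compact_cbox)
  have gainK: "gain W x i \<in> ?K i" if "x \<in> ?P" for x i
    unfolding gain_set_def using that bdd[of i]
    by (auto intro!: cInf_lower cSup_upper bounded_imp_bdd_below bounded_imp_bdd_above)
  have updP: "upd x i y \<in> ?P" if "x \<in> ?P" "y \<in> ?S i" for x i y
    using that by (auto simp: profile_set_def upd_def)
  have gain_upd: "gain W (upd x i y) i = gain W x i + (y - x $ i)" for x i y
  proof -
    have "(\<Sum>j\<in>UNIV. W $ i $ j * upd x i y $ j) =
          (\<Sum>j\<in>UNIV. W $ i $ j * x $ j + (if j = i then W $ i $ j * (y - x $ i) else 0))"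
      by (intro sum.cong) (auto simp: upd_def algebra_simps)
    then show ?thesis by (simp add: gain_def sum.distrib W_diag)
  qed
  have util_upd: "utility f c W i (upd x i y) = f i (gain W x i + (y - x $ i)) - c i y" for x i y
    unfolding utility_def gain_upd by (simp add: upd_def)
  have upd_self: "upd x i (x $ i) = x" for x i
    by (simp add: upd_def vec_eq_iff)
  have fstrong: "(f' i k2 - f' i k1) * (k2 - k1) \<le> - C i * (k2 - k1)^2"
    if "k1 \<in> ?K i" "k2 \<in> ?K i" for i k1 k2
  proof -
    have "f i k2 \<le> f i k1 + f' i k1 * (k2 - k1) - C i / 2 * (k2 - k1)^2"
      "f i k1 \<le> f i k2 + f' i k2 * (k1 - k2) - C i / 2 * (k1 - k2)^2"
      using f_Cconc[of i] that unfolding C_concave_on_def by blast+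
    then show ?thesis by (simp add: algebra_simps power2_eq_square)
  qed
  have cmono: "0 \<le> (c' i t2 - c' i t1) * (t2 - t1)"
    if "t1 \<in> ?S i" "t2 \<in> ?S i" for i t1 t2
  proof -
    have "c i t1 + c' i t1 * (t2 - t1) \<le> c i t2"
      using convex_tangent[of "lo i" "hi i" "c i" "c' i t1" t1 t2] c_convex[of i] c_d1[OF that(1)] that
      by (simp add: Sdef)
    moreover have "c i t2 + c' i t2 * (t1 - t2) \<le> c i t1"
      using convex_tangent[of "lo i" "hi i" "c i" "c' i t2" t2 t1] c_convex[of i] c_d1[OF that(2)] that
      by (simp add: Sdef)
    ultimately show ?thesis by (simp add: algebra_simps)
  qed
  have gderiv: "((\<lambda>z. f i (gain W x i + (z - x $ i)) - c i z) has_real_derivative F i x)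
       (at (x $ i) within ?S i)" if xP: "x \<in> ?P" for x i
  proof -
    let ?h = "\<lambda>z. gain W x i + (z - x $ i)"
    have img: "?h ` ?S i \<subseteq> ?K i"
    proof
      fix k assume "k \<in> ?h ` ?S i"
      then obtain z where z: "z \<in> ?S i" "k = ?h z" by blast
      have "gain W (upd x i z) i \<in> ?K i" by (rule gainK[OF updP[OF xP z(1)]])
      then show "k \<in> ?K i" using z by (simp add: gain_upd)
    qed
    have d1: "(f i has_real_derivative f' i (gain W x i)) (at (?h (x $ i)) within (?h ` ?S i))"
      using DERIV_subset[OF f_d1[OF gainK[OF xP]] img] by simp
    have d2: "(?h has_real_derivative 1) (at (x $ i) within ?S i)"
      by (auto intro!: derivative_eq_intros)
    have xi: "x $ i \<in> ?S i" using xP by (simp add: profile_set_def)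
    have "((f i \<circ> ?h) has_real_derivative f' i (gain W x i) * 1) (at (x $ i) within ?S i)"
      by (rule DERIV_image_chain[OF d1 d2])
    hence "((\<lambda>z. f i (?h z)) has_real_derivative f' i (gain W x i)) (at (x $ i) within ?S i)"
      by (simp add: comp_def)
    from DERIV_diff[OF this c_d1[OF xi]] show ?thesis by (simp add: F_def)
  qed
  have foc: "F i x * (y - x $ i) \<le> 0" if ne: "nash_equilibrium f c W lo hi x" and y: "y \<in> ?S i" for x i y
  proof -
    have xP: "x \<in> ?P" using ne by (simp add: nash_equilibrium_def)
    have xi: "x $ i \<in> ?S i" using xP by (simp add: profile_set_def)
    show ?thesis
    proof (rule foc_max[of "\<lambda>z. f i (gain W x i + (z - x $ i)) - c i z" "F i x" "x $ i" "lo i" "hi i"])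
      show "((\<lambda>z. f i (gain W x i + (z - x $ i)) - c i z) has_real_derivative F i x) (at (x $ i) within {lo i..hi i})"
        using gderiv[OF xP] by (simp add: Sdef)
      show "x $ i \<in> {lo i..hi i}" using xi by (simp add: Sdef)
      show "y \<in> {lo i..hi i}" using y by (simp add: Sdef)
      fix z assume z: "z \<in> {lo i..hi i}"
      have "utility f c W i (upd x i z) \<le> utility f c W i x"
        using ne z by (simp add: nash_equilibrium_def Sdef)
      moreover have "utility f c W i x = f i (gain W x i + (x $ i - x $ i)) - c i (x $ i)"
        using util_upd[of i x "x $ i"] by (simp add: upd_self)
      ultimately show "f i (gain W x i + (z - x $ i)) - c i z \<le> f i (gain W x i + (x $ i - x $ i)) - c i (x $ i)"
        by (simp add: util_upd)
    qed
  qed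
  have suff: "nash_equilibrium f c W lo hi x"
    if xP: "x \<in> ?P" and cond: "\<And>i. (F i x > 0 \<longrightarrow> x $ i = hi i) \<and> (F i x < 0 \<longrightarrow> x $ i = lo i)" for x
    unfolding nash_equilibrium_def
  proof (intro conjI allI ballI)
    show "x \<in> ?P" by (rule xP)
    fix i y assume y: "y \<in> ?S i"
    have xi: "x $ i \<in> ?S i" using xP by (simp add: profile_set_def)
    have k1: "gain W x i \<in> ?K i" by (rule gainK[OF xP])
    have k2: "gain W x i + (y - x $ i) \<in> ?K i" using gainK[OF updP[OF xP y], of i] by (simp add: gain_upd)
    have "f i (gain W x i + (y - x $ i)) \<le> f i (gain W x i) + f' i (gain W x i) * (y - x $ i)
            - C i / 2 * (y - x $ i)^2"
      using f_Cconc[of i] k1 k2 unfolding C_concave_on_def by fastforce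
    moreover have "C i / 2 * (y - x $ i)^2 \<ge> 0" using C_pos[of i] by simp
    moreover have "c i (x $ i) + c' i (x $ i) * (y - x $ i) \<le> c i y"
      using convex_tangent[of "lo i" "hi i" "c i" "c' i (x $ i)" "x $ i" y] c_convex[of i] c_d1[OF xi] xi y
      by (simp add: Sdef)
    moreover have "F i x * (y - x $ i) \<le> 0"
    proof -
      have "lo i \<le> y" "y \<le> hi i" using y by (auto simp: Sdef)
      then show ?thesis using cond[of i]
        by (cases "F i x > 0"; cases "F i x < 0") (auto simp: mult_le_0_iff)
    qed
    ultimately have "f i (gain W x i + (y - x $ i)) - c i y \<le> f i (gain W x i) - c i (x $ i)"
      by (simp add: F_def algebra_simps)
    then show "utility f c W i (upd x i y) \<le> utility f c W i x"
      unfolding util_upd by (simp add: utility_def)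
  qed
  show ?thesis
  proof (rule ex_ex1I)
    define T where "T = (\<lambda>x::real^'n. \<chi> i. max (lo i) (min (hi i) (x $ i + F i x)))"
    have fcont: "continuous_on (?K i) (f' i)" for i
      unfolding continuous_on_eq_continuous_within using DERIV_continuous[OF f_d2] by blast
    have ccont: "continuous_on (?S i) (c' i)" for i
      unfolding continuous_on_eq_continuous_within using DERIV_continuous[OF c_d2] by blast
    have Tcont: "continuous_on ?P T"
      unfolding T_def F_def
    proof (intro continuous_on_vec_lambda continuous_intros)
      fix i
      show "continuous_on ?P (\<lambda>x. f' i (gain W x i))"
        by (rule continuous_on_compose2[OF fcont gcont]) (auto intro: gainK)
      show "continuous_on ?P (\<lambda>x. c' i (x $ i))"
        by (rule continuous_on_compose2[OF ccont]) (auto intro!: continuous_intros simp: profile_set_def)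
    qed
    have Tmap: "T \<in> ?P \<rightarrow> ?P"
      using interval by (auto simp: T_def profile_set_def strat_set_def)
    have "compact ?P" "convex ?P" unfolding Pbox by (rule compact_cbox, rule convex_box)
    moreover have "(\<chi> i. lo i) \<in> ?P" using interval by (simp add: profile_set_def strat_set_def)
    hence "?P \<noteq> {}" by blast
    ultimately obtain x where xP: "x \<in> ?P" and fx: "T x = x"
      using brouwer[OF _ _ _ Tcont Tmap] by blast
    have "nash_equilibrium f c W lo hi x"
    proof (rule suff[OF xP])
      fix i
      have "max (lo i) (min (hi i) (x $ i + F i x)) = x $ i"
        using fx by (simp add: T_def vec_eq_iff)
      moreover have "lo i \<le> hi i" by (rule interval)
      ultimately show "(F i x > 0 \<longrightarrow> x $ i = hi i) \<and> (F i x < 0 \<longrightarrow> x $ i = lo i)"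
        by (auto simp: max_def min_def split: if_splits)
    qed
    then show "\<exists>x. nash_equilibrium f c W lo hi x" by blast
  next
    fix x y assume nx: "nash_equilibrium f c W lo hi x" and ny: "nash_equilibrium f c W lo hi y"
    have xP: "x \<in> ?P" and yP: "y \<in> ?P" using nx ny by (auto simp: nash_equilibrium_def)
    define d where "d = y - x"
    have per: "d $ i * (W *v d) $ i \<le> 0" for i
    proof -
      have xi: "x $ i \<in> ?S i" and yi: "y $ i \<in> ?S i" using xP yP by (auto simp: profile_set_def)
      have Wd: "(W *v d) $ i = gain W y i - gain W x i"
        by (simp add: d_def matrix_vector_mult_def gain_def sum_subtractf algebra_simps)
      define A where "A = f' i (gain W x i) - f' i (gain W y i)"
      define B where "B = c' i (y $ i) - c' i (x $ i)"
      define \<Delta> where "\<Delta> = gain W y i - gain W x i"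
      define D where "D = y $ i - x $ i"
      have h1: "A * \<Delta> \<ge> C i * \<Delta>^2"
        using fstrong[OF gainK[OF xP] gainK[OF yP], of i] by (simp add: A_def \<Delta>_def algebra_simps)
      have h2: "B * D \<ge> 0" using cmono[OF xi yi] by (simp add: B_def D_def)
      have h3: "D * (A + B) \<le> 0"
        using foc[OF nx yi] foc[OF ny xi] by (simp add: F_def A_def B_def D_def algebra_simps)
      have "D * \<Delta> \<le> 0"
      proof (rule ccontr)
        assume a: "\<not> D * \<Delta> \<le> 0"
        hence "\<Delta> \<noteq> 0" by auto
        hence "C i * \<Delta>^2 > 0" using C_pos[of i] by simp
        hence AD: "A * \<Delta> > 0" using h1 by linarith
        have "D * A \<le> 0" using h2 h3 by (simp add: algebra_simps)
        hence "(D * A) * (\<Delta> * \<Delta>) \<le> 0" by (simp add: mult_nonpos_nonneg)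
        moreover have "(D * \<Delta>) * (A * \<Delta>) > 0" using a AD by simp
        moreover have "(D * A) * (\<Delta> * \<Delta>) = (D * \<Delta>) * (A * \<Delta>)" by (simp add: algebra_simps)
        ultimately show False by linarith
      qed
      then show ?thesis unfolding Wd by (simp add: D_def \<Delta>_def d_def)
    qed
    have dWd: "d \<bullet> (W *v d) \<le> 0"
      unfolding inner_vec_def using per by (simp add: sum_nonpos)
    define S :: "real^'n^'n" where "S = (\<chi> i j. if i = j then 0
                      else 2 * L i * \<bar>W $ i $ j\<bar> / C i + \<bar>W0 $ i $ j - W $ i $ j\<bar>)"
    have spec: "\<sigma>0 > sigma_max S" unfolding S_def by (rule spectral)
    define e where "e = (\<chi> i. \<bar>d $ i\<bar>)"
    have E: "d \<bullet> (W0 *v d) - d \<bullet> (W *v d) = (\<Sum>i\<in>UNIV. \<Sum>j\<in>UNIV. d $ i * (W0 $ i $ j - W $ i $ j) * d $ j)"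
      by (simp add: inner_vec_def matrix_vector_mult_def sum_distrib_left sum_subtractf[symmetric] algebra_simps)
    have le1: "(\<Sum>i\<in>UNIV. \<Sum>j\<in>UNIV. d $ i * (W0 $ i $ j - W $ i $ j) * d $ j)
        \<le> (\<Sum>i\<in>UNIV. \<Sum>j\<in>UNIV. e $ i * S $ i $ j * e $ j)"
    proof (intro sum_mono)
      fix i j
      show "d $ i * (W0 $ i $ j - W $ i $ j) * d $ j \<le> e $ i * S $ i $ j * e $ j"
      proof (cases "i = j")
        case True then show ?thesis by (simp add: S_def W_diag W0_diag)
      next
        case False
        have Sge: "S $ i $ j \<ge> \<bar>W0 $ i $ j - W $ i $ j\<bar>"
          using False L_nonneg[of i] C_pos[of i] by (simp add: S_def)
        have "d $ i * (W0 $ i $ j - W $ i $ j) * d $ j \<le> \<bar>d $ i * (W0 $ i $ j - W $ i $ j) * d $ j\<bar>"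
          by simp
        also have "\<dots> = e $ i * \<bar>W0 $ i $ j - W $ i $ j\<bar> * e $ j" by (simp add: e_def abs_mult)
        also have "\<dots> \<le> e $ i * S $ i $ j * e $ j"
          using Sge by (intro mult_right_mono mult_left_mono) (auto simp: e_def)
        finally show ?thesis .
      qed
    qed
    have eS: "(\<Sum>i\<in>UNIV. \<Sum>j\<in>UNIV. e $ i * S $ i $ j * e $ j) = e \<bullet> (S *v e)"
      by (simp add: inner_vec_def matrix_vector_mult_def sum_distrib_left mult.assoc)
    have ne: "norm e = norm d" by (simp add: e_def norm_vec_def)
    have "e \<bullet> (S *v e) \<le> norm e * norm (S *v e)" by (rule norm_cauchy_schwarz)
    also have "\<dots> \<le> norm e * (sigma_max S * norm e)"
      unfolding sigma_max_def by (intro mult_left_mono onorm) auto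
    also have "\<dots> = sigma_max S * (d \<bullet> d)" by (simp add: ne power2_norm_eq_inner[symmetric] power2_eq_square)
    finally have up: "e \<bullet> (S *v e) \<le> sigma_max S * (d \<bullet> d)" .
    have low: "\<sigma>0 * (d \<bullet> d) \<le> d \<bullet> (W0 *v d)" by (rule min_eig_quad[OF W0_sym W0_min_eig])
    have "(\<sigma>0 - sigma_max S) * (d \<bullet> d) \<le> 0"
      using low up E le1 eS dWd by (simp add: algebra_simps)
    moreover have "\<sigma>0 - sigma_max S > 0" using spec by simp
    ultimately have "d \<bullet> d \<le> 0" by (simp add: mult_le_0_iff)
    hence "d = 0" using inner_ge_zero[of d] inner_eq_zero_iff[of d] by linarith
    then show "x = y" by (simp add: d_def)
  qed
qed

end
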